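(* For all complex $q$ with $|q|<1$, $$F^{\rm ed}_{\rm ou}(-q)=-\frac{(-q^2;q^2)_\infty}{2}\left(2-\frac{1}{(-q;q)_\infty}-\frac{2}{(q;q)_\infty}\sum_{n\in\mathbb Z}\frac{(-1)^n q^{\frac{3n(n+1)}{2}}}{1+q^n}\right).$$
   Context: For $n\in\mathbb N_0\cup\{\infty\}$, $(a;q)_n:=\prod_{j=0}^{n-1}(1-aq^j)$. Define $$F^{\rm ed}_{\rm ou}(q):=\sum_{n=0}^\infty \frac{q^{2n+1}(-q^{2n+2};q^2)_\infty}{(q;q^2)_{n+1}},$$ the generating function for partitions into at least one odd part, with odd parts unrestricted in multiplicity, and even parts distinct and all larger than every odd part; $F^{\rm ed}_{\rm ou}(-q)$ denotes this function evaluated at $-q$. *)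

theory Defs
  imports "HOL-Analysis.Analysis"
begin

definition qpoch :: "complex \<Rightarrow> complex \<Rightarrow> nat \<Rightarrow> complex" where
  "qpoch a q n = (\<Prod>j<n. 1 - a * q ^ j)"

definition qpoch_inf :: "complex \<Rightarrow> complex \<Rightarrow> complex" where
  "qpoch_inf a q = (\<Prod>j. 1 - a * q ^ j)"

definition F_ed_ou :: "complex \<Rightarrow> complex" where
  "F_ed_ou q = (\<Sum>n. q ^ (2*n+1) * qpoch_inf (- (q ^ (2*n+2))) (q^2) / qpoch q (q^2) (n+1))"

end

theory Submission
  imports Defs
begin

lemma qprod_conv:
  fixes q a :: complex assumes "norm q < 1"
  shows "convergent_prod (\<lambda>j. 1 - a * q^j)"
proof (rule abs_convergent_prod_imp_convergent_prod, rule summable_imp_abs_convergent_prod)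
  have "summable (\<lambda>j. norm a * norm q ^ j)"
    using assms by (intro summable_mult summable_geometric) auto
  then show "summable (\<lambda>j. norm (1 - a * q ^ j - 1))"
    by (simp add: norm_mult norm_power)
qed

lemma qpoch_tendsto:
  fixes q a :: complex assumes "norm q < 1"
  shows "(\<lambda>n. qpoch a q n) \<longlonglongrightarrow> qpoch_inf a q"
proof -
  have "(\<lambda>n. \<Prod>j\<le>n. 1 - a * q^j) \<longlonglongrightarrow> qpoch_inf a q"
    unfolding qpoch_inf_def using convergent_prod_LIMSEQ[OF qprod_conv[OF assms]] .
  then have "(\<lambda>n. \<Prod>j<Suc n. 1 - a * q^j) \<longlonglongrightarrow> qpoch_inf a q"
    by (simp add: lessThan_Suc_atMost)
  then show ?thesis unfolding qpoch_def
    by (rule LIMSEQ_imp_Suc[where f="\<lambda>n. \<Prod>j<n. 1 - a * q^j"])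
qed

lemma qpoch_inf_nz:
  fixes q a :: complex assumes "norm q < 1" "\<And>j. a * q^j \<noteq> 1"
  shows "qpoch_inf a q \<noteq> 0"
  unfolding qpoch_inf_def using assms by (intro prodinf_nonzero qprod_conv) auto

lemma qpoch_Suc: "qpoch a q (Suc n) = qpoch a q n * (1 - a * q^n)"
  by (simp add: qpoch_def)

lemma qpoch_0[simp]: "qpoch a q 0 = 1"
  by (simp add: qpoch_def)

definition cq :: "real \<Rightarrow> real" where
  "cq a = (\<Prod>j. 1 - a^(j+1))"

lemma cq_conv: fixes a :: real assumes "0 \<le> a" "a < 1"
  shows "convergent_prod (\<lambda>j. 1 - a^(j+1))"
proof -
  have "convergent_prod (\<lambda>j. 1 + (- (a^(j+1))))"
  proof (rule summable_imp_convergent_prod_real)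
    show "summable (\<lambda>k. \<bar>- (a ^ (k + 1))\<bar>)"
      using assms by (simp add: summable_geometric)
    fix k show "- (a^(k+1)) \<noteq> -1"
    proof
      assume "- (a^(k+1)) = -1"
      then have "a^(k+1) = 1" by simp
      moreover have "a^(k+1) < 1" using assms by (subst power_less_one_iff) auto
      ultimately show False by simp
    qed
  qed
  then show ?thesis by simp
qed

lemma factor_pos: fixes a :: real assumes "0 \<le> a" "a < 1" shows "0 < 1 - a^(j+1)"
proof -
  have "a^(j+1) < 1" using assms by (subst power_less_one_iff) auto
  then show ?thesis by simp
qed

lemma cq_pos: fixes a :: real assumes "0 \<le> a" "a < 1" shows "0 < cq a"
  unfolding cq_def using assms by (intro less_0_prodinf cq_conv factor_pos)

lemma cq_le: fixes a :: real assumes "0 \<le> a" "a < 1" shows "cq a \<le> (\<Prod>j<n. 1 - a^(j+1))"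
  unfolding cq_def
proof (rule prod_ge_prodinf)
  show "(\<lambda>j. 1 - a^(j+1)) has_prod (\<Prod>j. 1 - a^(j+1))"
    using cq_conv[OF assms] convergent_prod_has_prod by blast
  fix i show "0 \<le> 1 - a^(i+1)" using factor_pos[OF assms, of i] by simp
  show "1 - a^(i+1) \<le> 1" using assms by simp
qed

lemma prod_lower:
  fixes w :: "nat \<Rightarrow> complex"
  assumes "0 \<le> a" "a < 1" "\<And>j. norm (w j) \<le> a^(j+1)"
  shows "cq a \<le> norm (\<Prod>j<n. 1 + w j)"
proof -
  have "(\<Prod>j<n. 1 - a^(j+1)) \<le> (\<Prod>j<n. norm (1 + w j))"
  proof (rule prod_mono, safe)
    fix j show "0 \<le> 1 - a^(j+1)" using factor_pos[OF assms(1,2), of j] by simp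
    have "norm (1 + w j) \<ge> 1 - norm (w j)"
      by (metis add.commute norm_diff_ineq norm_one)
    then show "1 - a^(j+1) \<le> norm (1 + w j)" using assms(3)[of j] by linarith
  qed
  then show ?thesis using cq_le[OF assms(1,2), of n] by (simp add: prod_norm)
qed

lemma tri_even: "2 * ((r::int) * (r - 1) div 2) = r * (r - 1)"
proof -
  have "even (r * (r - 1))" by auto
  then show ?thesis by simp
qed

locale qc =
  fixes q :: complex
  assumes q1: "norm q < 1" and q0: "q \<noteq> 0"
begin

definition c :: real where "c = cq (norm q)"

lemma a_ge: "0 \<le> norm q" by simp
lemma a_pos: "0 < norm q" using q0 by simp

lemma c_pos: "0 < c" unfolding c_def using q1 by (intro cq_pos) auto

definition Qp :: "nat \<Rightarrow> complex" where "Qp n = qpoch q q n"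
definition Pp :: "nat \<Rightarrow> complex" where "Pp n = qpoch (-q) q n"

lemma Qp_0[simp]: "Qp 0 = 1" by (simp add: Qp_def)
lemma Pp_0[simp]: "Pp 0 = 1" by (simp add: Pp_def)
lemma Qp_Suc: "Qp (Suc n) = Qp n * (1 - q^(Suc n))"
  by (simp add: Qp_def qpoch_Suc)
lemma Pp_Suc: "Pp (Suc n) = Pp n * (1 + q^(Suc n))"
  by (simp add: Pp_def qpoch_Suc)


lemma Qp_lower: "c \<le> norm (Qp n)"
proof -
  have "Qp n = (\<Prod>j<n. 1 + (- (q * q^j)))" by (simp add: Qp_def qpoch_def)
  moreover have "c \<le> norm (\<Prod>j<n. 1 + (- (q * q^j)))"
    unfolding c_def using q1 by (intro prod_lower) (auto simp: norm_mult norm_power)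
  ultimately show ?thesis by simp
qed

lemma Pp_lower: "c \<le> norm (Pp n)"
proof -
  have "Pp n = (\<Prod>j<n. 1 + (q * q^j))" by (simp add: Pp_def qpoch_def)
  moreover have "c \<le> norm (\<Prod>j<n. 1 + (q * q^j))"
    unfolding c_def using q1 by (intro prod_lower) (auto simp: norm_mult norm_power)
  ultimately show ?thesis by simp
qed

lemma Qp_nz: "Qp n \<noteq> 0" using Qp_lower[of n] c_pos by auto
lemma Pp_nz: "Pp n \<noteq> 0" using Pp_lower[of n] c_pos by auto

lemma qpow_ne1: "n > 0 \<Longrightarrow> q^n \<noteq> 1"
proof
  assume "n > 0" "q^n = 1"
  then have "norm q ^ n = 1" by (metis norm_one norm_power)
  moreover have "norm q ^ n < 1" using q1 \<open>n>0\<close> by (simp add: power_less_one_iff)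
  ultimately show False by simp
qed

lemma qpow_nem1: "q^n \<noteq> -1"
proof
  assume "q^n = -1"
  then have "norm q ^ n = 1" by (metis norm_minus_cancel norm_one norm_power)
  moreover have "n > 0" using \<open>q^n = -1\<close> by (cases n) auto
  then have "norm q ^ n < 1" using q1 by (simp add: power_less_one_iff)
  ultimately show False by simp
qed

lemma qpowi_nem1: "q powi r \<noteq> -1"
proof (cases "r \<ge> 0")
  case True
  then show ?thesis using qpow_nem1[of "nat r"] by (simp add: power_int_def)
next
  case False
  then have "q powi r = inverse (q ^ nat (-r))" by (simp add: power_int_def power_inverse)
  moreover have "q ^ nat (-r) \<noteq> -1" by (rule qpow_nem1)
  ultimately show ?thesis
    by (metis inverse_eq_iff_eq inverse_minus_eq inverse_1)
qed

lemma onep_qpowi_nz: "1 + q powi r \<noteq> 0"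
  using qpowi_nem1[of r] by (metis add_eq_0_iff2 minus_equation_iff)

definition iQ :: "int \<Rightarrow> complex" where
  "iQ k = (if k < 0 then 0 else inverse (Qp (nat k)))"

lemma iQ_shift: "iQ (k - 1) = (1 - q powi k) * iQ k"
proof (cases "k \<le> 0")
  case True
  then show ?thesis by (cases "k = 0") (auto simp: iQ_def)
next
  case False
  then obtain m where m: "k = int (Suc m)" by (metis gr0_implies_Suc not_le zero_less_imp_eq_int of_nat_0_less_iff)
  have "1 - q^(Suc m) \<noteq> 0" using qpow_ne1[of "Suc m"] by auto
  moreover have "nat k = Suc m" "nat (k-1) = m" "\<not> k < 0" "\<not> k - 1 < 0"
    using m by auto
  moreover have "q powi k = q^Suc m" unfolding m by (rule power_int_of_nat)
  ultimately show ?thesis using Qp_nz[of m]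
    unfolding iQ_def by (simp add: Qp_Suc field_simps)
qed

lemma iQ_neg: "k < 0 \<Longrightarrow> iQ k = 0" by (simp add: iQ_def)
lemma iQ_nat: "iQ (int n) = inverse (Qp n)" by (simp add: iQ_def)

lemma norm_iQ: "norm (iQ k) \<le> 1 / c"
proof (cases "k < 0")
  case True then show ?thesis using c_pos by (simp add: iQ_def)
next
  case False
  then have "norm (iQ k) = 1 / norm (Qp (nat k))"
    by (simp add: iQ_def norm_inverse divide_inverse)
  also have "\<dots> \<le> 1 / c" using Qp_lower[of "nat k"] c_pos
    by (intro divide_left_mono) (auto intro!: mult_pos_pos)
  finally show ?thesis .
qed

end

lemma sum_int_telescope:
  fixes g :: "int \<Rightarrow> 'a::ab_group_add"
  assumes "a - 1 \<le> b"
  shows "(\<Sum>r\<in>{a..b}. g (r+1) - g r) = g (b+1) - g a"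
  using assms
proof (induction b rule: int_ge_induct)
  case base
  then show ?case by simp
next
  case (step i)
  have "{a..i+1} = insert (i+1) {a..i}" using step.hyps by auto
  then show ?case using step by simp
qed

lemma sum_int_reflect:
  fixes f :: "int \<Rightarrow> 'a::comm_monoid_add"
  shows "(\<Sum>r\<in>{-N..N}. f (-r)) = (\<Sum>r\<in>{-N..N}. f r)"
  by (rule sum.reindex_bij_witness[of _ uminus uminus]) auto

lemma sum_int_extend:
  fixes f :: "int \<Rightarrow> 'a::comm_monoid_add"
  assumes "N \<ge> 0"
  shows "(\<Sum>r\<in>{-N-1..N+1}. f r) = f (-N-1) + f (N+1) + (\<Sum>r\<in>{-N..N}. f r)"
proof -
  have "{-N-1..N+1} = insert (-N-1) (insert (N+1) {-N..N})" using assms by auto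
  moreover have "-N-1 \<notin> insert (N+1) {-N..N}" "N+1 \<notin> {-N..N}" using assms by auto
  ultimately show ?thesis by (simp add: add.assoc)
qed

definition TT :: "int \<Rightarrow> int" where "TT r = r * (r - 1) div 2"

lemma TT_0[simp]: "TT 0 = 0" by (simp add: TT_def)

lemma TT_Suc: "TT (r + 1) = TT r + r"
proof -
  have "2 * TT (r+1) = (r+1) * r" using tri_even[of "r+1"] by (simp add: TT_def)
  moreover have "2 * TT r = r * (r - 1)" using tri_even[of r] by (simp add: TT_def)
  ultimately show ?thesis by (simp add: algebra_simps)
qed

lemma TT_neg: "TT (-r) = TT r + r"
proof -
  have "2 * TT (-r) = (-r) * (-r - 1)" using tri_even[of "-r"] by (simp add: TT_def)
  moreover have "2 * TT r = r * (r - 1)" using tri_even[of r] by (simp add: TT_def)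
  ultimately show ?thesis by (simp add: algebra_simps)
qed

definition sg :: "int \<Rightarrow> complex" where "sg r = (-1) powi r"

lemma sg_Suc: "sg (r + 1) = - sg r"
  by (simp add: sg_def power_int_add_1)

lemma sg_sq: "sg r * sg r = 1"
proof -
  have "sg r * sg r = (-1) powi (r + r)" unfolding sg_def by (rule power_int_add[symmetric]) simp
  also have "r + r = 2 * r" by simp
  also have "(-1::complex) powi (2 * r) = ((-1) powi 2) powi r" by (rule power_int_mult)
  also have "\<dots> = 1" by simp
  finally show ?thesis .
qed

lemma sg_neg: "sg (-r) = sg r"
proof -
  have "sg (-r) = inverse (sg r)" by (simp add: sg_def power_int_minus)
  moreover have "sg r \<noteq> 0" using sg_sq[of r] by auto
  ultimately have "sg r * sg (-r) = sg r * sg r" using sg_sq[of r] by (simp add: field_simps)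
  then show ?thesis using \<open>sg r \<noteq> 0\<close> by simp
qed

lemma sg_0[simp]: "sg 0 = 1" by (simp add: sg_def)

context qc begin

lemma qpowi_nz: "q powi r \<noteq> 0" using q0 by simp

lemma qpowi_add: "q powi (m + n) = q powi m * q powi n"
  using q0 by (simp add: power_int_add)

lemma qpowi_diff: "q powi (m - n) = q powi m / q powi n"
  using q0 by (simp add: power_int_diff)

lemma qpowi_nat: "q powi (int n) = q ^ n" by simp

lemma iQ_m1[simp]: "iQ (-1) = 0" by (simp add: iQ_def)

definition HE :: "nat \<Rightarrow> int \<Rightarrow> complex" where
  "HE n r = sg r * q powi (TT r) * iQ (int n - r) * iQ (int n + r - 1)"

lemma algE:
  fixes s p x N B1 B2 :: complex
  assumes "x \<noteq> 0"
  shows "(- s) * (p * x) * ((1 - N / x) * B1) * B2 - s * p * B1 * ((1 - N * x) * B2)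
       = - (s * p * (1 + x) * (1 - N) * B1 * B2)"
  using assms by (simp add: field_simps)

lemma HE_step:
  "HE n (r + 1) - HE n r = - (sg r * q powi (TT r) * (1 + q powi r) * (1 - q ^ n) * iQ (int n - r) * iQ (int n + r))"
proof -
  have e1: "iQ (int n - (r + 1)) = (1 - q ^ n / q powi r) * iQ (int n - r)"
    using iQ_shift[of "int n - r"] by (simp add: qpowi_diff diff_diff_eq)
  have e2: "iQ (int n + r - 1) = (1 - q ^ n * q powi r) * iQ (int n + r)"
    using iQ_shift[of "int n + r"] by (simp add: qpowi_add)
  have e3: "int n + (r + 1) - 1 = int n + r" by simp
  show ?thesis unfolding HE_def sg_Suc TT_Suc qpowi_add e1 e2 e3
    using algE[OF qpowi_nz[of r]] by simp
qed

definition ES :: "nat \<Rightarrow> complex" where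
  "ES n = (\<Sum>r\<in>{-int n..int n}. sg r * q powi (TT r + r) * iQ (int n - r) * iQ (int n + r))"

lemma ES_eq: "ES n = (if n = 0 then 1 else 0)"
proof (cases "n = 0")
  case True
  then show ?thesis by (simp add: ES_def iQ_def)
next
  case False
  define u where "u r = sg r * q powi (TT r) * iQ (int n - r) * iQ (int n + r)" for r
  have tel: "(\<Sum>r\<in>{-int n..int n}. HE n (r + 1) - HE n r) = 0"
  proof -
    have "(\<Sum>r\<in>{-int n..int n}. HE n (r + 1) - HE n r) = HE n (int n + 1) - HE n (- int n)"
      by (rule sum_int_telescope) auto
    also have "\<dots> = 0" by (simp add: HE_def)
    finally show ?thesis .
  qed
  have "(\<Sum>r\<in>{-int n..int n}. HE n (r + 1) - HE n r)
      = (\<Sum>r\<in>{-int n..int n}. - ((1 - q ^ n) * (u r + u r * q powi r)))"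
    unfolding HE_step by (intro sum.cong) (auto simp: u_def algebra_simps)
  also have "\<dots> = - ((1 - q ^ n) * (\<Sum>r\<in>{-int n..int n}. u r + u r * q powi r))"
    by (simp add: sum_negf sum_distrib_left)
  finally have "(\<Sum>r\<in>{-int n..int n}. HE n (r + 1) - HE n r)
      = - ((1 - q ^ n) * (\<Sum>r\<in>{-int n..int n}. u r + u r * q powi r))" .
  with tel have "(1 - q ^ n) * (\<Sum>r\<in>{-int n..int n}. u r + u r * q powi r) = 0" by simp
  moreover have "1 - q ^ n \<noteq> 0" using qpow_ne1[of n] False by auto
  ultimately have z: "(\<Sum>r\<in>{-int n..int n}. u r + u r * q powi r) = 0" by simp
  have uq: "u r * q powi r = sg r * q powi (TT r + r) * iQ (int n - r) * iQ (int n + r)" for r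
    by (simp add: u_def qpowi_add)
  have refl: "(\<Sum>r\<in>{-int n..int n}. u r) = (\<Sum>r\<in>{-int n..int n}. u (-r))"
    by (rule sum_int_reflect[symmetric])
  have "u (-r) = sg r * q powi (TT r + r) * iQ (int n - r) * iQ (int n + r)" for r
    by (simp add: u_def sg_neg TT_neg algebra_simps)
  then have "(\<Sum>r\<in>{-int n..int n}. u r) = ES n" using refl by (simp add: ES_def)
  moreover have "(\<Sum>r\<in>{-int n..int n}. u r * q powi r) = ES n" by (simp add: uq ES_def)
  ultimately have "2 * ES n = 0" using z by (simp add: sum.distrib)
  then show ?thesis using False by simp
qed

end

lemma algT:
  fixes x u P s p B1 B2 :: complex
  assumes "x \<noteq> 0" "1 + x \<noteq> 0" "1 - u \<noteq> 0"
  shows "(P * (1 + u))^2 * (2 * s * (p * x) / (1 + x)) * B1 * B2 - P^2 * (2 * s * (p * x) / (1 + x)) * ((1 - u / x) * B1) * ((1 - u * x) * B2)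
    = (-2 * (- s) * (p * x) * u * P^2 / (1 - u) * ((1 - u / x) * B1) * B2) - (-2 * s * p * u * P^2 / (1 - u) * B1 * ((1 - u * x) * B2))"
proof -
  define K where "K = 2 * P^2 * s * p * B1 * B2"
  have h1: "(1 + u)^2 - (1 - u / x) * (1 - u * x) = u * (1 + x)^2 / x"
    using assms by (simp add: field_simps power2_eq_square)
  have h2: "x * (1 - u / x) + (1 - u * x) = (1 + x) * (1 - u)"
    using assms by (simp add: field_simps)
  have xx: "x + x * x \<noteq> 0"
  proof -
    have "x + x * x = x * (1 + x)" by (simp add: algebra_simps)
    then show ?thesis using assms by simp
  qed
  have "(P * (1 + u))^2 * (2 * s * (p * x) / (1 + x)) * B1 * B2 - P^2 * (2 * s * (p * x) / (1 + x)) * ((1 - u / x) * B1) * ((1 - u * x) * B2)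
      = K * (x / (1 + x)) * ((1 + u)^2 - (1 - u / x) * (1 - u * x))"
    unfolding K_def by (simp add: divide_inverse algebra_simps power2_eq_square)
  also have "\<dots> = K * u * (1 + x)" unfolding h1 using assms xx by (simp add: field_simps power2_eq_square)
  also have "\<dots> = K * (u / (1 - u)) * (x * (1 - u / x) + (1 - u * x))"
    unfolding h2 using assms by (simp add: field_simps)
  also have "\<dots> = (-2 * (- s) * (p * x) * u * P^2 / (1 - u) * ((1 - u / x) * B1) * B2) - (-2 * s * p * u * P^2 / (1 - u) * B1 * ((1 - u * x) * B2))"
    unfolding K_def by (simp add: divide_inverse algebra_simps power2_eq_square)
  finally show ?thesis .
qed

context qc begin

definition aT :: "int \<Rightarrow> complex" where
  "aT r = 2 * sg r * q powi (TT r + r) / (1 + q powi r)"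

definition Fw :: "nat \<Rightarrow> int \<Rightarrow> complex" where
  "Fw n r = Pp n ^ 2 * aT r * iQ (int n - r) * iQ (int n + r)"

definition Gw :: "nat \<Rightarrow> int \<Rightarrow> complex" where
  "Gw n r = -2 * sg r * q powi (TT r) * q^(Suc n) * Pp n ^ 2 / (1 - q^(Suc n)) * iQ (int n + 1 - r) * iQ (int n + r)"

lemma Fw_step: "Fw (Suc n) r - Fw n r = Gw n (r + 1) - Gw n r"
proof -
  define u where "u = q ^ Suc n"
  define x where "x = q powi r"
  define p where "p = q powi (TT r)"
  define B1 where "B1 = iQ (int n + 1 - r)"
  define B2 where "B2 = iQ (int n + 1 + r)"
  have x0: "x \<noteq> 0" unfolding x_def by (rule qpowi_nz)
  have x1: "1 + x \<noteq> 0" unfolding x_def by (rule onep_qpowi_nz)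
  have u1: "1 - u \<noteq> 0" unfolding u_def using qpow_ne1[of "Suc n"] by auto
  have pw1: "q powi (int n + 1 - r) = u / x"
    by (simp add: u_def x_def qpowi_diff qpowi_add)
  have pw2: "q powi (int n + 1 + r) = u * x"
    by (simp add: u_def x_def qpowi_add)
  have i1: "iQ (int n - r) = (1 - u / x) * B1"
    using iQ_shift[of "int n + 1 - r"] unfolding B1_def pw1 by simp
  have i2: "iQ (int n + r) = (1 - u * x) * B2"
    using iQ_shift[of "int n + 1 + r"] unfolding B2_def pw2 by simp
  have A: "aT r = 2 * sg r * (p * x) / (1 + x)"
    by (simp add: aT_def p_def x_def qpowi_add)
  have f1: "Fw (Suc n) r = (Pp n * (1 + u))^2 * aT r * B1 * B2"
    by (simp add: Fw_def Pp_Suc u_def B1_def B2_def add_ac)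
  have f2: "Fw n r = Pp n ^ 2 * aT r * ((1 - u / x) * B1) * ((1 - u * x) * B2)"
    by (simp add: Fw_def i1 i2)
  have f3: "Gw n (r + 1) = -2 * (- sg r) * (p * x) * u * Pp n ^ 2 / (1 - u) * ((1 - u / x) * B1) * B2"
  proof -
    have e1: "int n + 1 - (r + 1) = int n - r" and e2: "int n + (r + 1) = int n + 1 + r" by simp_all
    show ?thesis unfolding Gw_def e1 e2 sg_Suc TT_Suc qpowi_add
      by (simp add: i1 B2_def u_def p_def x_def)
  qed
  have f4: "Gw n r = -2 * sg r * p * u * Pp n ^ 2 / (1 - u) * B1 * ((1 - u * x) * B2)"
    by (simp add: Gw_def i2 B1_def u_def p_def)
  show ?thesis unfolding f1 f2 f3 f4 A by (rule algT[OF x0 x1 u1])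
qed

lemma Fw_out1: "Fw n (int n + 1) = 0" by (simp add: Fw_def)
lemma Fw_out2: "Fw n (- int n - 1) = 0" by (simp add: Fw_def)
lemma Gw_out1: "Gw n (2 + int n) = 0" by (simp add: Gw_def)
lemma Gw_out2: "Gw n (- int n - 1) = 0" by (simp add: Gw_def)

lemma Fw_sum: "(\<Sum>r\<in>{-int n..int n}. Fw n r) = 1"
proof (induction n)
  case 0
  then show ?case by (simp add: Fw_def aT_def iQ_def)
next
  case (Suc n)
  have rng: "{-int (Suc n)..int (Suc n)} = {-int n - 1..int n + 1}" by simp
  have "(\<Sum>r\<in>{-int n - 1..int n + 1}. Fw (Suc n) r)
      = (\<Sum>r\<in>{-int n - 1..int n + 1}. Fw n r + (Gw n (r + 1) - Gw n r))"
    by (intro sum.cong) (auto simp: Fw_step[symmetric])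
  also have "\<dots> = (\<Sum>r\<in>{-int n - 1..int n + 1}. Fw n r) + (\<Sum>r\<in>{-int n - 1..int n + 1}. Gw n (r + 1) - Gw n r)"
    by (rule sum.distrib)
  also have "(\<Sum>r\<in>{-int n - 1..int n + 1}. Gw n (r + 1) - Gw n r) = Gw n (int n + 1 + 1) - Gw n (- int n - 1)"
    by (rule sum_int_telescope) auto
  also have "(\<Sum>r\<in>{-int n - 1..int n + 1}. Fw n r) = Fw n (- int n - 1) + Fw n (int n + 1) + (\<Sum>r\<in>{-int n..int n}. Fw n r)"
    by (rule sum_int_extend) auto
  finally show ?case using Suc.IH unfolding rng by (simp add: Fw_out1 Fw_out2 Gw_out1 Gw_out2)
qed

lemma TS_eq: "(\<Sum>r\<in>{-int n..int n}. aT r * iQ (int n - r) * iQ (int n + r)) = inverse (Pp n ^ 2)"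
proof -
  have "(\<Sum>r\<in>{-int n..int n}. Fw n r) = Pp n ^ 2 * (\<Sum>r\<in>{-int n..int n}. aT r * iQ (int n - r) * iQ (int n + r))"
    by (simp add: Fw_def sum_distrib_left mult.assoc)
  then show ?thesis using Fw_sum[of n] Pp_nz[of n] by (simp add: field_simps)
qed

end

lemma sbound:
  fixes f :: "nat \<Rightarrow> 'a::banach"
  assumes "summable g" "\<And>n. norm (f n) \<le> g n"
  shows "summable f" "norm (suminf f) \<le> suminf g"
proof -
  have sn: "summable (\<lambda>n. norm (f n))"
    by (rule summable_comparison_test[of _ g]) (use assms in auto)
  then show "summable f" by (rule summable_norm_cancel)
  have "norm (suminf f) \<le> (\<Sum>n. norm (f n))" by (rule summable_norm[OF sn])
  also have "\<dots> \<le> suminf g" by (rule suminf_le) (use assms sn in auto)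
  finally show "norm (suminf f) \<le> suminf g" .
qed

lemma nat_bridge:
  fixes f :: "nat \<Rightarrow> complex"
  assumes "summable (\<lambda>n. norm (f n))"
  shows "f summable_on UNIV" "infsum f UNIV = suminf f"
proof -
  have "((\<lambda>n. norm (f n)) has_sum (\<Sum>n. norm (f n))) UNIV"
    using assms by (intro sums_nonneg_imp_has_sum) (auto simp: summable_sums)
  then have "(\<lambda>n. norm (f n)) summable_on UNIV" by (rule has_sum_imp_summable)
  then show fs: "f summable_on UNIV" by (simp add: summable_on_iff_abs_summable_on_complex)
  then have "f sums (infsum f UNIV)" by (intro has_sum_imp_sums has_sum_infsum)
  then show "infsum f UNIV = suminf f" by (simp add: sums_iff)
qed

lemma frac_bound:
  fixes x y z :: complex
  assumes "norm x \<le> A" "c \<le> norm y" "c \<le> norm z" "0 < c"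
  shows "norm (x / (y * z)) \<le> A / (c * c)"
proof -
  have "norm (x / (y * z)) = norm x / (norm y * norm z)" by (simp add: norm_divide norm_mult)
  also have "\<dots> \<le> A / (c * c)"
    using assms by (intro frac_le mult_mono mult_pos_pos) (auto intro: order.trans[OF _ assms(1)])
  finally show ?thesis .
qed

context qc begin

lemma a_lt1: "norm q < 1" by (rule q1)

lemma apow_le: "m \<le> n \<Longrightarrow> norm q ^ n \<le> norm q ^ m"
  using q1 by (intro power_decreasing) auto

lemma norm_qpow: "norm (q ^ n) = norm q ^ n" by (simp add: norm_power)

definition Qinf where "Qinf = qpoch_inf q q"
definition Pinf where "Pinf = qpoch_inf (-q) q"

lemma Qp_lim: "Qp \<longlonglongrightarrow> Qinf"
  unfolding Qp_def[abs_def] Qinf_def using qpoch_tendsto[OF q1] .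
lemma Pp_lim: "Pp \<longlonglongrightarrow> Pinf"
  unfolding Pp_def[abs_def] Pinf_def using qpoch_tendsto[OF q1] .

lemma Qinf_nz: "Qinf \<noteq> 0"
  unfolding Qinf_def
proof (rule qpoch_inf_nz[OF q1])
  fix j show "q * q ^ j \<noteq> 1" using qpow_ne1[of "Suc j"] by simp
qed

lemma Pinf_nz: "Pinf \<noteq> 0"
  unfolding Pinf_def
proof (rule qpoch_inf_nz[OF q1])
  fix j show "- q * q ^ j \<noteq> 1" using qpow_nem1[of "Suc j"] by (auto simp: minus_equation_iff)
qed

lemma geo_summable: "summable (\<lambda>n. norm q ^ n * B)"
  using q1 by (intro summable_mult2 summable_geometric) auto

definition ct :: "nat \<Rightarrow> nat \<Rightarrow> complex" where
  "ct j k = q ^ (k * k + j * k) / (Qp k * Qp (k + j))"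

lemma ct_bound: "norm (ct j k) \<le> norm q ^ k * (1 / (c * c))"
proof -
  have "norm (q ^ (k * k + j * k)) \<le> norm q ^ k"
    unfolding norm_qpow by (rule apow_le) (cases k; simp)
  then have "norm (ct j k) \<le> norm q ^ k / (c * c)"
    unfolding ct_def by (intro frac_bound Qp_lower c_pos)
  then show ?thesis by simp
qed

lemma ct_bound2: "norm (ct j (Suc k)) \<le> norm q ^ k * (norm q ^ j / (c * c))"
proof -
  have "norm (q ^ (Suc k * Suc k + j * Suc k)) \<le> norm q ^ (k + j)"
    unfolding norm_qpow by (rule apow_le) (simp add: algebra_simps)
  then have "norm (ct j (Suc k)) \<le> norm q ^ (k + j) / (c * c)"
    unfolding ct_def by (intro frac_bound Qp_lower c_pos)
  then show ?thesis by (simp add: power_add)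
qed

lemma ct_summable: "summable (ct j)"
  by (rule sbound(1)[OF geo_summable ct_bound])

definition cc :: "nat \<Rightarrow> complex" where "cc j = suminf (ct j)"

definition vv :: "nat \<Rightarrow> nat \<Rightarrow> complex" where
  "vv j k = q ^ (k * k + j * k) * (1 - q ^ k) / (Qp k * Qp (k + j))"

lemma algV:
  fixes p X Y D W :: complex
  assumes "D \<noteq> 0" "W \<noteq> 0" "W = 1 - Y"
  shows "p * (1 - X) / D - p * X * Y / (D * W) = p / D - p * X / (D * W)"
proof -
  have h: "p * X / (D * W) - p * X / D = p * X * (1 - W) / (D * W)"
    using assms(1,2) by (simp add: field_simps)
  have "1 - W = Y" using assms(3) by simp
  with h have "p * X * Y / (D * W) = p * X / (D * W) - p * X / D" by simp
  then show ?thesis by (simp add: algebra_simps diff_divide_distrib)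
qed

lemma vv_step: "vv j k - vv j (Suc k) = ct j k - ct (Suc j) k"
proof -
  define p where "p = q ^ (k * k + j * k)"
  define X where "X = q ^ k"
  define Y where "Y = q ^ Suc (k + j)"
  define D where "D = Qp k * Qp (k + j)"
  define W where "W = 1 - Y"
  have e1: "Suc k * Suc k + j * Suc k = (k * k + j * k) + k + Suc (k + j)" by (simp add: algebra_simps)
  have e2: "k * k + Suc j * k = (k * k + j * k) + k" by (simp add: algebra_simps)
  have W0: "W \<noteq> 0" unfolding W_def Y_def using qpow_ne1[of "Suc (k + j)"] by auto
  have X1: "1 - q ^ Suc k \<noteq> 0" using qpow_ne1[of "Suc k"] by auto
  have D0: "D \<noteq> 0" unfolding D_def using Qp_nz by simp
  have s1: "Suc k + j = Suc (k + j)" "k + Suc j = Suc (k + j)" by simp_all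
  have "vv j (Suc k) = p * X * Y * (1 - q ^ Suc k) / ((Qp k * (1 - q ^ Suc k)) * (Qp (k + j) * W))"
    unfolding vv_def e1 s1 Qp_Suc by (simp add: p_def X_def Y_def W_def power_add)
  also have "(Qp k * (1 - q ^ Suc k)) * (Qp (k + j) * W) = (D * W) * (1 - q ^ Suc k)"
    by (simp add: D_def algebra_simps)
  also have "p * X * Y * (1 - q ^ Suc k) / ((D * W) * (1 - q ^ Suc k)) = p * X * Y / (D * W)"
    by (rule mult_divide_mult_cancel_right[OF X1])
  finally have v1: "vv j (Suc k) = p * X * Y / (D * W)" .
  have v0: "vv j k = p * (1 - X) / D" by (simp add: vv_def p_def X_def D_def)
  have c0: "ct j k = p / D" by (simp add: ct_def p_def D_def)
  have c1: "ct (Suc j) k = p * X / (D * W)"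
    unfolding ct_def e2 s1 Qp_Suc by (simp add: p_def X_def D_def W_def Y_def power_add mult.assoc)
  show ?thesis unfolding v1 v0 c0 c1 by (rule algV[OF D0 W0 W_def])
qed

lemma vv_lim: "vv j \<longlonglongrightarrow> 0"
proof (rule Lim_null_comparison)
  show "\<forall>\<^sub>F k in sequentially. norm (vv j k) \<le> norm q ^ k * (2 / (c * c))"
  proof (intro always_eventually allI)
    fix k
    have "norm (q ^ (k * k + j * k) * (1 - q ^ k)) \<le> norm q ^ k * 2"
    proof -
      have "norm (q ^ (k * k + j * k)) \<le> norm q ^ k"
        unfolding norm_qpow by (rule apow_le) (cases k; simp)
      moreover have "norm (1 - q ^ k) \<le> 2"
      proof -
        have "norm (1 - q ^ k) \<le> 1 + norm (q ^ k)" using norm_triangle_ineq4[of 1 "q ^ k"] by simp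
        moreover have "norm (q ^ k) \<le> 1" unfolding norm_qpow using q1 by (simp add: power_le_one)
        ultimately show ?thesis by simp
      qed
      ultimately show ?thesis by (simp add: norm_mult mult_mono)
    qed
    then have "norm (vv j k) \<le> norm q ^ k * 2 / (c * c)"
      unfolding vv_def by (intro frac_bound Qp_lower c_pos)
    then show "norm (vv j k) \<le> norm q ^ k * (2 / (c * c))" by simp
  qed
  show "(\<lambda>k. norm q ^ k * (2 / (c * c))) \<longlonglongrightarrow> 0"
    using q1 by (intro tendsto_mult_left_zero LIMSEQ_power_zero) auto
qed

lemma cc_Suc: "cc (Suc j) = cc j"
proof -
  have "(\<lambda>k. vv j k - vv j (Suc k)) sums (vv j 0 - 0)" by (rule telescope_sums'[OF vv_lim])
  moreover have "(\<lambda>k. vv j k - vv j (Suc k)) = (\<lambda>k. ct j k - ct (Suc j) k)"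
    by (rule ext) (rule vv_step)
  moreover have "vv j 0 = 0" by (simp add: vv_def)
  ultimately have "(\<lambda>k. ct j k - ct (Suc j) k) sums 0" by simp
  then have "(\<Sum>k. ct j k - ct (Suc j) k) = 0" by (simp add: sums_iff)
  then show ?thesis unfolding cc_def using suminf_diff[OF ct_summable ct_summable, of j "Suc j"] by simp
qed

lemma cc_const: "cc (j + m) = cc j"
  by (induction m) (auto simp: cc_Suc)

lemma cc_eq: "cc j = inverse Qinf"
proof -
  have lim1: "(\<lambda>m. inverse (Qp (j + m))) \<longlonglongrightarrow> inverse Qinf"
  proof -
    have "(\<lambda>m. Qp (m + j)) \<longlonglongrightarrow> Qinf" using LIMSEQ_ignore_initial_segment[OF Qp_lim, of j] .
    then have "(\<lambda>m. Qp (j + m)) \<longlonglongrightarrow> Qinf" by (simp add: add.commute)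
    then show ?thesis using Qinf_nz by (intro tendsto_inverse) auto
  qed
  have err: "(\<lambda>m. cc (j + m) - inverse (Qp (j + m))) \<longlonglongrightarrow> 0"
  proof (rule Lim_null_comparison)
    show "\<forall>\<^sub>F m in sequentially. norm (cc (j + m) - inverse (Qp (j + m))) \<le> norm q ^ (j + m) * (1 / (1 - norm q) / (c * c))"
    proof (intro always_eventually allI)
      fix m
      define J where "J = j + m"
      have "cc J - inverse (Qp J) = (\<Sum>k. ct J (Suc k))"
        unfolding cc_def using suminf_split_head[OF ct_summable, of J] by (simp add: ct_def field_simps)
      moreover have "norm (\<Sum>k. ct J (Suc k)) \<le> (\<Sum>k. norm q ^ k * (norm q ^ J / (c * c)))"
        by (rule sbound(2)[OF geo_summable ct_bound2])
      moreover have "(\<Sum>k. norm q ^ k * (norm q ^ J / (c * c))) = 1 / (1 - norm q) * (norm q ^ J / (c * c))"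
        by (rule sums_unique[symmetric], rule sums_mult2, rule geometric_sums) (use q1 in simp)
      moreover have "1 / (1 - norm q) * (norm q ^ J / (c * c)) = norm q ^ J * (1 / (1 - norm q) / (c * c))"
        by simp
      ultimately show "norm (cc (j + m) - inverse (Qp (j + m))) \<le> norm q ^ (j + m) * (1 / (1 - norm q) / (c * c))"
        unfolding J_def by simp
    qed
    show "(\<lambda>m. norm q ^ (j + m) * (1 / (1 - norm q) / (c * c))) \<longlonglongrightarrow> 0"
    proof -
      have "(\<lambda>m. norm q ^ (m + j)) \<longlonglongrightarrow> 0"
        using LIMSEQ_ignore_initial_segment[OF LIMSEQ_power_zero[of "norm q"], of j] q1 by simp
      then show ?thesis by (intro tendsto_mult_left_zero) (simp add: add.commute)
    qed
  qed
  have "(\<lambda>m. cc (j + m)) \<longlonglongrightarrow> inverse Qinf"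
    using tendsto_add[OF err lim1] by simp
  moreover have "(\<lambda>m. cc (j + m)) \<longlonglongrightarrow> cc j" by (simp add: cc_const)
  ultimately show ?thesis using LIMSEQ_unique by blast
qed

end

lemma frac_bound1:
  fixes x y :: complex
  assumes "norm x \<le> A" "c \<le> norm y" "0 < c"
  shows "norm (x / y) \<le> A / c"
proof -
  have "norm (x / y) = norm x / norm y" by (simp add: norm_divide)
  also have "\<dots> \<le> A / c"
    using assms by (intro frac_le) (auto intro: order.trans[OF _ assms(1)])
  finally show ?thesis .
qed

lemma onep_nz: fixes x :: complex assumes "x \<noteq> -1" shows "1 + x \<noteq> 0"
proof
  assume h: "1 + x = 0"
  have "x = (1 + x) - 1" by simp
  then show False using h assms by simp
qed

lemma divdiv: fixes x P R T w :: complex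
  assumes "w \<noteq> 0" "P \<noteq> 0" "R \<noteq> 0" "T \<noteq> 0"
  shows "x / (P * (R * T / w)) / w = x / (P * R * T)"
  using assms by (simp add: field_simps)

context qc begin

definition Rz :: "complex \<Rightarrow> nat \<Rightarrow> complex" where
  "Rz z n = (\<Prod>j<n. 1 + z * q ^ Suc j)"

lemma Rz_0[simp]: "Rz z 0 = 1" by (simp add: Rz_def)
lemma Rz_Suc: "Rz z (Suc n) = Rz z n * (1 + z * q ^ Suc n)" by (simp add: Rz_def)

lemma Rz_shift: "Rz z (Suc n) = (1 + z * q) * Rz (z * q) n"
  by (induction n) (auto simp: Rz_Suc mult_ac)

lemma Rz_one: "Rz 1 n = Pp n"
  by (induction n) (auto simp: Rz_Suc Pp_Suc)

lemma Rz_lower: assumes "norm z \<le> 1" shows "c \<le> norm (Rz z n)"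
  unfolding Rz_def c_def
proof (rule prod_lower)
  show "0 \<le> norm q" "norm q < 1" using q1 by auto
  fix j
  have "norm (z * q ^ Suc j) \<le> 1 * norm q ^ Suc j"
    unfolding norm_mult norm_qpow using assms by (intro mult_right_mono) auto
  then show "norm (z * q ^ Suc j) \<le> norm q ^ (j + 1)" by simp
qed

definition xt :: "complex \<Rightarrow> nat \<Rightarrow> complex" where
  "xt z n = q ^ (n * n) * z ^ n / (Pp n * Rz z n)"

definition Xf :: "complex \<Rightarrow> complex" where "Xf z = suminf (xt z)"

definition yt :: "complex \<Rightarrow> nat \<Rightarrow> complex" where
  "yt z m = (- (z * q)) ^ m / Pp m"

definition Yf :: "complex \<Rightarrow> complex" where "Yf z = suminf (yt z)"

lemma pow_le1: fixes z :: complex shows "norm z \<le> 1 \<Longrightarrow> norm (z ^ n) \<le> 1"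
  by (simp add: norm_power power_le_one)

lemma xt_bound: assumes "norm z \<le> 1" shows "norm (xt z n) \<le> norm q ^ n * (1 / (c * c))"
proof -
  have h1: "norm q ^ (n * n) \<le> norm q ^ n" by (rule apow_le) (cases n; simp)
  have "norm (q ^ (n * n) * z ^ n) \<le> norm q ^ n * 1"
    unfolding norm_mult norm_qpow
    using pow_le1[OF assms, of n] h1 by (intro mult_mono) auto
  then have "norm (xt z n) \<le> norm q ^ n * 1 / (c * c)"
    unfolding xt_def by (intro frac_bound Pp_lower Rz_lower[OF assms] c_pos)
  then show ?thesis by simp
qed

lemma xt_summable: "norm z \<le> 1 \<Longrightarrow> summable (xt z)"
  by (rule sbound(1)[OF geo_summable xt_bound])

lemma yt_bound: assumes "norm z \<le> 1" shows "norm (yt z m) \<le> norm q ^ m * (1 / c)"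
proof -
  have "norm ((- (z * q)) ^ m) \<le> norm q ^ m"
    unfolding norm_power norm_minus_cancel norm_mult
    using assms by (intro power_mono) (auto intro: mult_left_le_one_le)
  then have "norm (yt z m) \<le> norm q ^ m / c"
    unfolding yt_def by (intro frac_bound1 Pp_lower c_pos)
  then show ?thesis by simp
qed

lemma yt_summable: "norm z \<le> 1 \<Longrightarrow> summable (yt z)"
  by (rule sbound(1)[OF geo_summable yt_bound])

lemma norm_zq: "norm z \<le> 1 \<Longrightarrow> norm (z * q) \<le> 1"
  using q1 by (auto simp: norm_mult intro: mult_le_one)

lemma onep_zq: "norm z \<le> 1 \<Longrightarrow> 1 + z * q \<noteq> 0"
proof
  assume "norm z \<le> 1" "1 + z * q = 0"
  then have "z * q = -1"
  proof -
    have "z * q = (1 + z * q) - 1" by simp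
    then show ?thesis using \<open>1 + z * q = 0\<close> by simp
  qed
  then have "norm (z * q) = 1" by simp
  moreover have "norm (z * q) < 1"
  proof -
    have "norm (z * q) = norm z * norm q" by (simp add: norm_mult)
    also have "\<dots> \<le> 1 * norm q" using \<open>norm z \<le> 1\<close> by (intro mult_right_mono) auto
    also have "\<dots> < 1" using q1 by simp
    finally show ?thesis .
  qed
  ultimately show False by simp
qed

definition ww :: "complex \<Rightarrow> nat \<Rightarrow> complex" where
  "ww z n = q ^ (n * n) * z ^ n * (1 + q ^ n) / (Pp n * Rz z n)"

lemma algW:
  fixes p Z X P R T zz qq :: complex
  assumes "P \<noteq> 0" "R \<noteq> 0" "T \<noteq> 0" "T = 1 + zz * qq * X"
  shows "p * Z * (1 + X) / (P * R) - p * X * X * qq * Z * zz / (P * R * T)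
      = p * Z / (P * R) + p * Z * X / (P * R * T)"
proof -
  have "(1 + X) * T - X * X * qq * zz = T + X" using assms(4) by (simp add: algebra_simps)
  then have "p * Z * ((1 + X) * T - X * X * qq * zz) / (P * R * T) = p * Z * (T + X) / (P * R * T)" by simp
  then show ?thesis using assms(1-3) by (simp add: field_simps)
qed

lemma ww_step: assumes "norm z \<le> 1"
  shows "ww z n - ww z (Suc n) = xt z n + xt (z * q) n / (1 + z * q)"
proof -
  define p where "p = q ^ (n * n)"
  define Z where "Z = z ^ n"
  define X where "X = q ^ n"
  define T where "T = 1 + z * q * X"
  have T0: "T \<noteq> 0"
  proof -
    have "T = 1 + z * q ^ Suc n" by (simp add: T_def X_def mult_ac)
    moreover have "Rz z (Suc n) \<noteq> 0" using Rz_lower[OF assms, of "Suc n"] c_pos by auto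
    ultimately show ?thesis by (simp add: Rz_Suc)
  qed
  have R0: "Rz z n \<noteq> 0" using Rz_lower[OF assms, of n] c_pos by auto
  have X1: "1 + q * X \<noteq> 0" using qpow_nem1[of "Suc n"] unfolding X_def by (intro onep_nz) simp
  have zq0: "1 + z * q \<noteq> 0" by (rule onep_zq[OF assms])
  have e1: "Suc n * Suc n = n * n + n + n + 1" by simp
  have RS: "Rz z (Suc n) = Rz z n * T" by (simp add: Rz_Suc T_def X_def mult_ac)
  have Rq: "Rz (z * q) n = Rz z n * T / (1 + z * q)"
    using Rz_shift[of z n] zq0 RS by (simp add: field_simps)
  have "ww z (Suc n) = p * X * X * q * Z * z * (1 + q * X) / ((Pp n * (1 + q * X)) * (Rz z n * T))"
    unfolding ww_def e1 RS Pp_Suc by (simp add: p_def X_def Z_def power_add mult_ac)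
  also have "(Pp n * (1 + q * X)) * (Rz z n * T) = (Pp n * Rz z n * T) * (1 + q * X)"
    by (simp add: algebra_simps)
  also have "p * X * X * q * Z * z * (1 + q * X) / ((Pp n * Rz z n * T) * (1 + q * X)) = p * X * X * q * Z * z / (Pp n * Rz z n * T)"
    by (rule mult_divide_mult_cancel_right[OF X1])
  finally have w1: "ww z (Suc n) = p * X * X * q * Z * z / (Pp n * Rz z n * T)" .
  have w0: "ww z n = p * Z * (1 + X) / (Pp n * Rz z n)" by (simp add: ww_def p_def Z_def X_def)
  have x0: "xt z n = p * Z / (Pp n * Rz z n)" by (simp add: xt_def p_def Z_def)
  have "xt (z * q) n / (1 + z * q) = p * (Z * X) / (Pp n * (Rz z n * T / (1 + z * q))) / (1 + z * q)"
    by (simp add: xt_def Rq p_def Z_def X_def power_mult_distrib)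
  also have "\<dots> = p * Z * X / (Pp n * Rz z n * T)"
    using divdiv[OF zq0 Pp_nz R0 T0, of "p * (Z * X)"] by (simp add: mult_ac)
  finally have x1: "xt (z * q) n / (1 + z * q) = p * Z * X / (Pp n * Rz z n * T)" .
  show ?thesis unfolding w1 w0 x0 x1
    by (rule algW[OF Pp_nz R0 T0]) (simp add: T_def)
qed

lemma ww_lim: assumes "norm z \<le> 1" shows "ww z \<longlonglongrightarrow> 0"
proof (rule Lim_null_comparison)
  show "\<forall>\<^sub>F n in sequentially. norm (ww z n) \<le> norm q ^ n * (2 / (c * c))"
  proof (intro always_eventually allI)
    fix n
    have "norm (q ^ (n * n) * z ^ n * (1 + q ^ n)) \<le> norm q ^ n * 1 * 2"
    proof -
      have "norm (1 + q ^ n) \<le> 2"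
      proof -
        have "norm (1 + q ^ n) \<le> 1 + norm (q ^ n)" using norm_triangle_ineq[of 1 "q ^ n"] by simp
        moreover have "norm (q ^ n) \<le> 1" unfolding norm_qpow using q1 by (simp add: power_le_one)
        ultimately show ?thesis by simp
      qed
      moreover have "norm (q ^ (n * n)) \<le> norm q ^ n" unfolding norm_qpow by (rule apow_le) (cases n; simp)
      ultimately show ?thesis unfolding norm_mult
        using pow_le1[OF assms, of n] by (intro mult_mono) auto
    qed
    then have "norm (ww z n) \<le> norm q ^ n * 1 * 2 / (c * c)"
      unfolding ww_def by (intro frac_bound Pp_lower Rz_lower[OF assms] c_pos)
    then show "norm (ww z n) \<le> norm q ^ n * (2 / (c * c))" by simp
  qed
  show "(\<lambda>n. norm q ^ n * (2 / (c * c))) \<longlonglongrightarrow> 0"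
    using q1 by (intro tendsto_mult_left_zero LIMSEQ_power_zero) auto
qed

lemma X_fun: assumes "norm z \<le> 1" shows "Xf z + Xf (z * q) / (1 + z * q) = 2"
proof -
  have "(\<lambda>n. ww z n - ww z (Suc n)) sums (ww z 0 - 0)" by (rule telescope_sums'[OF ww_lim[OF assms]])
  moreover have "ww z 0 = 2" by (simp add: ww_def)
  moreover have "(\<lambda>n. ww z n - ww z (Suc n)) = (\<lambda>n. xt z n + xt (z * q) n / (1 + z * q))"
    by (rule ext) (rule ww_step[OF assms])
  ultimately have s: "(\<lambda>n. xt z n + xt (z * q) n / (1 + z * q)) sums 2" by simp
  have s1: "summable (xt z)" by (rule xt_summable[OF assms])
  have s2: "summable (\<lambda>n. xt (z * q) n / (1 + z * q))"
    by (rule summable_divide, rule xt_summable[OF norm_zq[OF assms]])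
  have "Xf z + Xf (z * q) / (1 + z * q) = (\<Sum>n. xt z n + xt (z * q) n / (1 + z * q))"
    unfolding Xf_def using suminf_add[OF s1 s2] suminf_divide[OF xt_summable[OF norm_zq[OF assms]]]
    by simp
  then show ?thesis using s by (simp add: sums_iff)
qed

lemma Y_fun: assumes "norm z \<le> 1" shows "Yf (z * q) + (1 + z * q) * Yf z = 2"
proof -
  define t where "t = - (z * q)"
  have s1: "summable (yt z)" by (rule yt_summable[OF assms])
  have s2: "summable (yt (z * q))" by (rule yt_summable[OF norm_zq[OF assms]])
  define f where "f m = yt (z * q) m + yt z m" for m
  have sf: "summable f" unfolding f_def by (intro summable_add s1 s2)
  have f0: "f 0 = 2" by (simp add: f_def yt_def)
  have fS: "f (Suc m) = t * yt z m" for m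
  proof -
    have a1: "(- (z * q * q)) ^ Suc m = t ^ Suc m * q ^ Suc m"
      unfolding t_def power_mult_distrib[symmetric] by simp
    have a2: "(- (z * q)) ^ Suc m = t ^ Suc m" by (simp add: t_def)
    have q1': "1 + q ^ Suc m \<noteq> 0" by (rule onep_nz[OF qpow_nem1])
    have "f (Suc m) = (t ^ Suc m * q ^ Suc m + t ^ Suc m) / Pp (Suc m)"
      unfolding f_def yt_def a1 a2 by (simp add: add_divide_distrib)
    also have "\<dots> = (t ^ Suc m * (1 + q ^ Suc m)) / (Pp m * (1 + q ^ Suc m))"
      by (simp add: Pp_Suc algebra_simps)
    also have "\<dots> = t ^ Suc m / Pp m" by (rule mult_divide_mult_cancel_right[OF q1'])
    also have "\<dots> = t * yt z m" by (simp add: yt_def t_def)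
    finally show ?thesis .
  qed
  have "suminf f = f 0 + (\<Sum>m. f (Suc m))" using suminf_split_head[OF sf] by simp
  also have "(\<Sum>m. f (Suc m)) = t * Yf z" unfolding fS Yf_def by (rule suminf_mult[OF s1])
  finally have "suminf f = 2 + t * Yf z" using f0 by simp
  moreover have "suminf f = Yf (z * q) + Yf z" unfolding f_def Yf_def using suminf_add[OF s2 s1] by simp
  ultimately show ?thesis by (simp add: t_def algebra_simps)
qed

end

context qc begin

lemma normqk: "norm (q ^ k) \<le> 1" unfolding norm_qpow using q1 by (simp add: power_le_one)

definition DD :: "nat \<Rightarrow> complex" where "DD k = Xf (q ^ k) + Yf (q ^ k) - 2"

lemma DD_Suc: "DD (Suc k) = - (1 + q ^ Suc k) * DD k"
proof -
  have x: "Xf (q ^ k) + Xf (q ^ k * q) / (1 + q ^ k * q) = 2" by (rule X_fun[OF normqk])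
  have y: "Yf (q ^ k * q) + (1 + q ^ k * q) * Yf (q ^ k) = 2" by (rule Y_fun[OF normqk])
  have nz: "1 + q ^ k * q \<noteq> 0" by (rule onep_zq[OF normqk])
  have qs: "q ^ Suc k = q ^ k * q" by (simp add: power_Suc2)
  from x nz have x': "Xf (q ^ k * q) = (1 + q ^ k * q) * (2 - Xf (q ^ k))"
    by (simp add: field_simps)
  from y have y': "Yf (q ^ k * q) = 2 - (1 + q ^ k * q) * Yf (q ^ k)" by (simp add: algebra_simps)
  show ?thesis unfolding DD_def qs x' y' by (simp add: algebra_simps)
qed

lemma DD_form: "DD k = (-1) ^ k * Pp k * DD 0"
  by (induction k) (auto simp: DD_Suc Pp_Suc algebra_simps)

lemma X_err: "norm (Xf (q ^ k) - 1) \<le> norm q ^ k * (1 / (1 - norm q) / (c * c))"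
proof -
  have "Xf (q ^ k) - 1 = (\<Sum>n. xt (q ^ k) (Suc n))"
    unfolding Xf_def using suminf_split_head[OF xt_summable[OF normqk], of k]
    by (simp add: xt_def)
  moreover have "norm (\<Sum>n. xt (q ^ k) (Suc n)) \<le> (\<Sum>n. norm q ^ n * (norm q ^ k / (c * c)))"
  proof (rule sbound(2)[OF geo_summable])
    fix n
    have "norm (q ^ (Suc n * Suc n) * (q ^ k) ^ Suc n) \<le> norm q ^ (n + k)"
    proof -
      have "norm (q ^ (Suc n * Suc n) * (q ^ k) ^ Suc n) = norm q ^ (Suc n * Suc n) * (norm q ^ k) ^ Suc n"
        by (simp only: norm_mult norm_power)
      also have "(norm q ^ k) ^ Suc n = norm q ^ (k * Suc n)" by (rule power_mult[symmetric])
      also have "norm q ^ (Suc n * Suc n) * norm q ^ (k * Suc n) = norm q ^ (Suc n * Suc n + k * Suc n)"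
        by (rule power_add[symmetric])
      also have "\<dots> \<le> norm q ^ (n + k)" by (rule apow_le) (simp add: algebra_simps)
      finally show ?thesis .
    qed
    then have "norm (xt (q ^ k) (Suc n)) \<le> norm q ^ (n + k) / (c * c)"
      unfolding xt_def by (intro frac_bound Pp_lower Rz_lower[OF normqk] c_pos)
    then show "norm (xt (q ^ k) (Suc n)) \<le> norm q ^ n * (norm q ^ k / (c * c))"
      by (simp add: power_add)
  qed
  moreover have "(\<Sum>n. norm q ^ n * (norm q ^ k / (c * c))) = 1 / (1 - norm q) * (norm q ^ k / (c * c))"
    by (rule sums_unique[symmetric], rule sums_mult2, rule geometric_sums) (use q1 in simp)
  ultimately show ?thesis by simp
qed

lemma Y_err: "norm (Yf (q ^ k) - 1) \<le> norm q ^ k * (1 / (1 - norm q) / c)"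
proof -
  have "Yf (q ^ k) - 1 = (\<Sum>n. yt (q ^ k) (Suc n))"
    unfolding Yf_def using suminf_split_head[OF yt_summable[OF normqk], of k]
    by (simp add: yt_def)
  moreover have "norm (\<Sum>n. yt (q ^ k) (Suc n)) \<le> (\<Sum>n. norm q ^ n * (norm q ^ k / c))"
  proof (rule sbound(2)[OF geo_summable])
    fix n
    have "norm ((- (q ^ k * q)) ^ Suc n) \<le> norm q ^ (n + k)"
    proof -
      have "norm ((- (q ^ k * q)) ^ Suc n) = (norm q ^ Suc k) ^ Suc n"
        by (simp only: norm_minus_cancel norm_mult norm_power power_Suc2)
      also have "\<dots> = norm q ^ (Suc k * Suc n)" by (rule power_mult[symmetric])
      also have "\<dots> \<le> norm q ^ (n + k)" by (rule apow_le) (simp add: algebra_simps)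
      finally show ?thesis .
    qed
    then have "norm (yt (q ^ k) (Suc n)) \<le> norm q ^ (n + k) / c"
      unfolding yt_def by (intro frac_bound1 Pp_lower c_pos)
    then show "norm (yt (q ^ k) (Suc n)) \<le> norm q ^ n * (norm q ^ k / c)"
      by (simp add: power_add)
  qed
  moreover have "(\<Sum>n. norm q ^ n * (norm q ^ k / c)) = 1 / (1 - norm q) * (norm q ^ k / c)"
    by (rule sums_unique[symmetric], rule sums_mult2, rule geometric_sums) (use q1 in simp)
  ultimately show ?thesis by simp
qed

lemma DD0: "DD 0 = 0"
proof -
  define K where "K = 1 / (1 - norm q) / (c * c) + 1 / (1 - norm q) / c"
  have bnd: "c * norm (DD 0) \<le> norm q ^ k * K" for k
  proof -
    have "c * norm (DD 0) \<le> norm (Pp k) * norm (DD 0)"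
      using Pp_lower[of k] by (intro mult_right_mono) auto
    also have "\<dots> = norm (DD k)" using DD_form[of k] by (simp add: norm_mult norm_power)
    also have "DD k = (Xf (q ^ k) - 1) + (Yf (q ^ k) - 1)" by (simp add: DD_def)
    also have "norm \<dots> \<le> norm (Xf (q ^ k) - 1) + norm (Yf (q ^ k) - 1)" by (rule norm_triangle_ineq)
    also have "\<dots> \<le> norm q ^ k * K" using X_err[of k] Y_err[of k] by (simp add: K_def distrib_left)
    finally show ?thesis .
  qed
  have "(\<lambda>k. norm q ^ k * K) \<longlonglongrightarrow> 0"
    using q1 by (intro tendsto_mult_left_zero LIMSEQ_power_zero) auto
  then have "c * norm (DD 0) \<le> 0"
    by (rule LIMSEQ_le_const) (use bnd in auto)
  then show ?thesis using c_pos by (simp add: mult_le_0_iff)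
qed

lemma XY_one: "(\<Sum>n. q ^ (n * n) / (Pp n * Pp n)) + (\<Sum>m. (- q) ^ m / Pp m) = 2"
proof -
  have "Xf 1 + Yf 1 = 2" using DD0 by (simp add: DD_def)
  moreover have "xt 1 = (\<lambda>n. q ^ (n * n) / (Pp n * Pp n))" by (rule ext) (simp add: xt_def Rz_one)
  moreover have "yt 1 = (\<lambda>m. (- q) ^ m / Pp m)" by (rule ext) (simp add: yt_def)
  ultimately show ?thesis by (simp add: Xf_def Yf_def)
qed

end

context qc begin

definition aB :: "int \<Rightarrow> complex" where
  "aB r = sg r * q powi (TT r + 2 * r) / (1 + q powi r)"

lemma aB_split: "aB r = sg r * q powi (TT r + r) - aT r / 2"
proof -
  define x where "x = q powi r"
  have x1: "1 + x \<noteq> 0" unfolding x_def by (rule onep_qpowi_nz)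
  have e: "q powi (TT r + 2 * r) = q powi (TT r + r) * x"
    unfolding x_def by (simp add: qpowi_add[symmetric] algebra_simps)
  define P where "P = sg r * q powi (TT r + r)"
  have h1: "aB r = P * x / (1 + x)" unfolding aB_def e P_def x_def by (simp add: mult.assoc)
  have h2: "aT r = 2 * (P / (1 + x))" unfolding aT_def P_def x_def
    by (simp only: times_divide_eq_right mult.assoc)
  have h3: "aT r / 2 = P / (1 + x)" using h2 by (metis nonzero_mult_div_cancel_left zero_neq_numeral)
  have h4: "P * x / (1 + x) = P - P / (1 + x)" using x1 by (simp add: field_simps)
  have "aB r = P - aT r / 2" unfolding h1 h3 h4 ..
  then show ?thesis by (simp only: P_def)
qed

lemma BS_eq: "(\<Sum>r\<in>{-int n..int n}. aB r * iQ (int n - r) * iQ (int n + r))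
    = (if n = 0 then 1 else 0) - inverse (Pp n ^ 2) / 2"
proof -
  have "(\<Sum>r\<in>{-int n..int n}. aB r * iQ (int n - r) * iQ (int n + r))
     = (\<Sum>r\<in>{-int n..int n}. sg r * q powi (TT r + r) * iQ (int n - r) * iQ (int n + r))
       - (\<Sum>r\<in>{-int n..int n}. aT r * iQ (int n - r) * iQ (int n + r)) / 2"
    unfolding aB_split by (simp add: sum_subtractf sum_divide_distrib algebra_simps)
  then show ?thesis using ES_eq[of n] TS_eq[of n] unfolding ES_def by simp
qed

lemma TT_nonneg: "TT r \<ge> 0"
proof -
  have "r * (r - 1) \<ge> 0" by (cases "r \<ge> 1") (auto simp: mult_nonneg_nonneg mult_nonpos_nonpos)
  then show ?thesis unfolding TT_def by simp
qed

lemma norm_qpowi_nonneg: "k \<ge> 0 \<Longrightarrow> norm (q powi k) \<le> 1"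
proof -
  assume "k \<ge> 0"
  then have "q powi k = q ^ nat k" by (simp add: power_int_def)
  then show ?thesis using normqk[of "nat k"] by simp
qed

lemma onep_lower: "1 - norm q \<le> norm (1 + q ^ m)"
proof (cases m)
  case 0
  then have "norm (1 + q ^ m) = 2" by simp
  moreover have "0 \<le> norm q" by simp
  ultimately show ?thesis by linarith
next
  case (Suc k)
  have "1 - norm (q ^ m) \<le> norm (1 + q ^ m)"
    using norm_diff_ineq[of 1 "q ^ m"] by simp
  moreover have "norm (q ^ m) \<le> norm q" unfolding norm_qpow using Suc apow_le[of 1 m] by simp
  ultimately show ?thesis by simp
qed

lemma sg_norm: "norm (sg r) = 1"
  unfolding sg_def by (simp add: norm_power_int)

lemma aB_bound: "norm (aB r) \<le> 1 / (1 - norm q)"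
proof (cases "r \<ge> 0")
  case True
  then obtain m where m: "r = int m" by (metis nonneg_eq_int)
  have "norm (aB r) = norm (q powi (TT r + 2 * r)) / norm (1 + q ^ m)"
    unfolding aB_def m by (simp add: norm_mult norm_divide sg_norm)
  also have "\<dots> \<le> 1 / (1 - norm q)"
    using q1 onep_lower[of m] norm_qpowi_nonneg[of "TT r + 2 * r"] TT_nonneg[of r] True
    by (intro frac_le) auto
  finally show ?thesis .
next
  case False
  then obtain m where m: "r = - int m" by (metis nonneg_eq_int neg_0_le_iff_le nle_le minus_minus)
  have x0: "q powi (-r) \<noteq> 0" by (rule qpowi_nz)
  have "aB r = sg r * (q powi (TT r + 2 * r) * q powi (-r)) / ((1 + q powi r) * q powi (-r))"
    unfolding aB_def using x0 by simp
  also have "q powi (TT r + 2 * r) * q powi (-r) = q powi (TT (-r))"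
    by (simp add: qpowi_add[symmetric] TT_neg algebra_simps)
  also have "(1 + q powi r) * q powi (-r) = 1 + q ^ m"
    using x0 by (simp add: m distrib_right qpowi_add[symmetric] power_int_minus)
  finally have e: "aB r = sg r * q powi (TT (-r)) / (1 + q ^ m)" .
  have "norm (aB r) = norm (q powi (TT (-r))) / norm (1 + q ^ m)"
    unfolding e by (simp add: norm_mult norm_divide sg_norm)
  also have "\<dots> \<le> 1 / (1 - norm q)"
    using q1 onep_lower[of m] norm_qpowi_nonneg[OF TT_nonneg[of "-r"]]
    by (intro frac_le) auto
  finally show ?thesis .
qed

end

lemma real_nat_summable_on:
  fixes g :: "nat \<Rightarrow> real"
  assumes "summable g" "\<And>n. 0 \<le> g n"
  shows "(\<lambda>n. norm (g n)) summable_on UNIV"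
proof -
  have "(g has_sum suminf g) UNIV"
    using assms by (intro sums_nonneg_imp_has_sum) (auto simp: summable_sums)
  then have "g summable_on UNIV" by (rule has_sum_imp_summable)
  moreover have "(\<lambda>n. norm (g n)) = g" using assms(2) by (auto simp: fun_eq_iff)
  ultimately show ?thesis by simp
qed

lemma three_tri: "(3 * r * (r + 1)) div 2 = TT r + 2 * r + r * r"
proof -
  have "even (3 * r * (r + 1))" by simp
  then have "2 * ((3 * r * (r + 1)) div 2) = 3 * r * (r + 1)" by simp
  moreover have "2 * TT r = r * (r - 1)" using tri_even[of r] by (simp add: TT_def)
  ultimately show ?thesis by (simp add: algebra_simps)
qed

context qc begin

definition bt :: "nat \<Rightarrow> int \<Rightarrow> complex" where
  "bt n r = q ^ (n * n) * aB r * iQ (int n - r) * iQ (int n + r)"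

lemma bt_zero: "r \<notin> {-int n..int n} \<Longrightarrow> bt n r = 0"
  by (auto simp: bt_def iQ_def)

lemma bt_row: "infsum (bt n) UNIV = q ^ (n * n) * ((if n = 0 then 1 else 0) - inverse (Pp n ^ 2) / 2)"
proof -
  have "infsum (bt n) UNIV = infsum (bt n) {-int n..int n}"
    by (rule infsum_cong_neutral) (auto simp: bt_zero)
  also have "\<dots> = (\<Sum>r\<in>{-int n..int n}. bt n r)" by simp
  also have "\<dots> = q ^ (n * n) * (\<Sum>r\<in>{-int n..int n}. aB r * iQ (int n - r) * iQ (int n + r))"
    by (simp add: bt_def sum_distrib_left mult.assoc)
  finally show ?thesis using BS_eq[of n] by simp
qed

lemma bt_norm: "norm (bt n r) \<le> norm q ^ (n * n) * (1 / (1 - norm q) / (c * c))"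
proof -
  have "norm (bt n r) = norm q ^ (n * n) * norm (aB r) * norm (iQ (int n - r)) * norm (iQ (int n + r))"
    by (simp add: bt_def norm_mult norm_power)
  also have "\<dots> \<le> norm q ^ (n * n) * (1 / (1 - norm q)) * (1 / c) * (1 / c)"
    using q1 c_pos by (intro mult_mono aB_bound norm_iQ) (auto intro!: divide_nonneg_nonneg mult_nonneg_nonneg)
  finally show ?thesis by simp
qed

lemma na_bound: obtains K where "0 < K" "\<And>n. real (2 * n + 1) * norm q ^ n \<le> K"
proof -
  have "(\<lambda>n. of_nat n * norm q ^ n) \<longlonglongrightarrow> (0::real)"
    by (rule powser_times_n_limit_0) (use q1 in simp)
  then have "Bseq (\<lambda>n. of_nat n * norm q ^ n :: real)" by (rule convergent_imp_Bseq[OF convergentI])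
  then obtain K where K: "0 < K" "\<And>n. norm (of_nat n * norm q ^ n :: real) \<le> K"
    by (auto elim: BseqE)
  show ?thesis
  proof
    show "0 < 2 * K + 1" using K by simp
    fix n
    have "real n * norm q ^ n \<le> K" using K(2)[of n] by simp
    moreover have "norm q ^ n \<le> 1" using normqk[of n] by (simp add: norm_qpow)
    ultimately show "real (2 * n + 1) * norm q ^ n \<le> 2 * K + 1" by (simp add: algebra_simps)
  qed
qed

lemma row_bound: obtains B where "\<And>n. infsum (\<lambda>r. norm (bt n r)) UNIV \<le> norm q ^ n * B"
proof -
  obtain K where K: "0 < K" "\<And>n. real (2 * n + 1) * norm q ^ n \<le> K" using na_bound by blast
  define M where "M = 1 / (1 - norm q) / (c * c)"
  have M0: "0 \<le> M" unfolding M_def using q1 by simp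
  show ?thesis
  proof
    fix n
    have "infsum (\<lambda>r. norm (bt n r)) UNIV = infsum (\<lambda>r. norm (bt n r)) {-int n..int n}"
      by (rule infsum_cong_neutral) (auto simp: bt_zero)
    also have "\<dots> = (\<Sum>r\<in>{-int n..int n}. norm (bt n r))" by simp
    also have "\<dots> \<le> of_nat (card {-int n..int n}) * (norm q ^ (n * n) * M)"
      by (rule sum_bounded_above) (use bt_norm in \<open>simp add: M_def\<close>)
    also have "card {-int n..int n} = 2 * n + 1" by simp
    also have "real (2 * n + 1) * (norm q ^ (n * n) * M) \<le> norm q ^ n * (K * M / norm q)"
    proof -
      have "norm q ^ (n * n) * norm q \<le> norm q ^ n * norm q ^ n"
      proof -
        have "norm q ^ (n * n) * norm q = norm q ^ (n * n + 1)" by simp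
        also have "\<dots> \<le> norm q ^ (n + n)" by (rule apow_le) (cases n; simp)
        finally show ?thesis by (simp add: power_add)
      qed
      then have hh: "norm q ^ (n * n) \<le> norm q ^ n * norm q ^ n / norm q"
        using a_pos by (simp add: field_simps)
      have "real (2 * n + 1) * norm q ^ (n * n) \<le> real (2 * n + 1) * (norm q ^ n * norm q ^ n / norm q)"
        by (rule mult_left_mono[OF hh]) simp
      also have "\<dots> = (real (2 * n + 1) * norm q ^ n) * norm q ^ n / norm q" by simp
      also have "\<dots> \<le> K * norm q ^ n / norm q"
        using K(2)[of n] a_pos by (intro divide_right_mono mult_right_mono) auto
      finally have "real (2 * n + 1) * norm q ^ (n * n) \<le> K * norm q ^ n / norm q" .
      then have "real (2 * n + 1) * norm q ^ (n * n) * M \<le> K * norm q ^ n / norm q * M"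
        using M0 by (rule mult_right_mono)
      then show ?thesis by (simp add: mult_ac)
    qed
    finally show "infsum (\<lambda>r. norm (bt n r)) UNIV \<le> norm q ^ n * (K * M / norm q)" .
  qed
qed

lemma bt_summable: "(\<lambda>(n, r). bt n r) summable_on UNIV \<times> UNIV"
proof -
  obtain B where B: "\<And>n. infsum (\<lambda>r. norm (bt n r)) UNIV \<le> norm q ^ n * B" using row_bound by blast
  have inner: "(\<lambda>r. norm (bt n r)) summable_on UNIV" for n
  proof (rule finite_nonzero_values_imp_summable_on)
    have "{r \<in> UNIV. norm (bt n r) \<noteq> 0} \<subseteq> {-int n..int n}"
    proof (rule subsetI)
      fix r assume "r \<in> {r \<in> UNIV. norm (bt n r) \<noteq> 0}"
      then have "bt n r \<noteq> 0" by simp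
      then show "r \<in> {-int n..int n}" using bt_zero[of r n] by blast
    qed
    then show "finite {r \<in> UNIV. norm (bt n r) \<noteq> 0}" by (rule finite_subset) simp
  qed
  have outer: "(\<lambda>n. norm (infsum (\<lambda>r. norm (bt n r)) UNIV)) summable_on UNIV"
  proof (rule real_nat_summable_on)
    have nn: "0 \<le> infsum (\<lambda>r. norm (bt n r)) UNIV" for n by (rule infsum_nonneg) simp
    show "summable (\<lambda>n. infsum (\<lambda>r. norm (bt n r)) UNIV)"
    proof (rule sbound(1)[OF geo_summable[of B]])
      fix n show "norm (infsum (\<lambda>r. norm (bt n r)) UNIV) \<le> norm q ^ n * B"
        using B[of n] nn[of n] by simp
    qed
    show "0 \<le> infsum (\<lambda>r. norm (bt n r)) UNIV" for n by (rule nn)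
  qed
  have "(\<lambda>x. norm ((\<lambda>(n, r). bt n r) x)) summable_on UNIV \<times> UNIV"
    using Infinite_Sum.abs_summable_on_Sigma_iff[where f="\<lambda>(n, r). bt n r" and A=UNIV and B="\<lambda>_. UNIV"] inner outer
    by simp
  then show ?thesis by (simp add: summable_on_iff_abs_summable_on_complex)
qed

lemma col_eq: "infsum (\<lambda>n. bt n r) UNIV = aB r * q powi (r * r) * inverse Qinf"
proof -
  define g where "g n = q ^ (n * n) * iQ (int n - r) * iQ (int n + r)" for n
  have bt_g: "bt n r = aB r * g n" for n by (simp add: bt_def g_def mult_ac)
  have gb: "norm (g n) \<le> norm q ^ n * (1 / (c * c))" for n
  proof -
    have "norm (g n) = norm q ^ (n * n) * norm (iQ (int n - r)) * norm (iQ (int n + r))"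
      by (simp add: g_def norm_mult norm_power)
    also have "\<dots> \<le> norm q ^ n * (1 / c) * (1 / c)"
      using c_pos by (intro mult_mono norm_iQ apow_le) (auto simp: le_square)
    finally show ?thesis by simp
  qed
  have gs: "summable (\<lambda>n. norm (g n))"
    by (rule summable_comparison_test[OF _ geo_summable]) (auto intro: gb)
  define m where "m = nat \<bar>r\<bar>"
  have rm: "r = int m \<or> r = - int m" unfolding m_def by auto
  have z: "g n = 0" if "n < m" for n
    using that rm by (auto simp: g_def iQ_def)
  have sh: "g (k + m) = q ^ (m * m) * ct (2 * m) k" for k
  proof -
    have e: "(k + m) * (k + m) = m * m + (k * k + 2 * m * k)" by (simp add: algebra_simps)
    have p: "q ^ ((k + m) * (k + m)) = q ^ (m * m) * q ^ (k * k + 2 * m * k)"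
      unfolding e by (rule power_add)
    have ii: "iQ (int (k + m) - r) * iQ (int (k + m) + r) = inverse (Qp k) * inverse (Qp (k + 2 * m))"
      using rm
    proof
      assume r: "r = int m"
      have "int (k + m) - r = int k" "int (k + m) + r = int (k + 2 * m)" using r by simp_all
      then show ?thesis by (simp only: iQ_nat)
    next
      assume r: "r = - int m"
      have "int (k + m) - r = int (k + 2 * m)" "int (k + m) + r = int k" using r by simp_all
      then show ?thesis by (simp only: iQ_nat mult.commute)
    qed
    have "g (k + m) = q ^ ((k + m) * (k + m)) * (iQ (int (k + m) - r) * iQ (int (k + m) + r))"
      by (simp add: g_def mult.assoc)
    also have "\<dots> = q ^ (m * m) * (q ^ (k * k + 2 * m * k) * (inverse (Qp k) * inverse (Qp (k + 2 * m))))"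
      unfolding p ii by (simp only: mult.assoc)
    also have "\<dots> = q ^ (m * m) * ct (2 * m) k"
      by (simp add: ct_def divide_inverse mult_ac)
    finally show ?thesis .
  qed
  have "(\<lambda>k. q ^ (m * m) * ct (2 * m) k) sums (q ^ (m * m) * cc (2 * m))"
    unfolding cc_def by (rule sums_mult) (rule summable_sums[OF ct_summable])
  then have "(\<lambda>k. g (k + m)) sums (q ^ (m * m) * inverse Qinf)" by (simp add: sh cc_eq)
  then have "g sums (q ^ (m * m) * inverse Qinf)" by (subst (asm) sums_zero_iff_shift) (auto intro: z)
  then have "infsum g UNIV = q ^ (m * m) * inverse Qinf"
    using nat_bridge(2)[OF gs] by (simp add: sums_iff)
  moreover have "q ^ (m * m) = q powi (r * r)"
  proof -
    have rr: "r * r = int (m * m)" using rm by auto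
    show ?thesis unfolding rr by (rule power_int_of_nat[symmetric])
  qed
  ultimately show ?thesis
    unfolding bt_g by (simp add: infsum_cmult_right' mult.assoc)
qed

lemma bailey: "1 - (\<Sum>n. q ^ (n * n) / (Pp n * Pp n)) / 2
   = (\<Sum>\<^sub>\<infinity>r\<in>(UNIV::int set). (-1) powi r * q powi ((3 * r * (r + 1)) div 2) / (1 + q powi r)) * inverse Qinf"
proof -
  have swap: "infsum (\<lambda>n. infsum (\<lambda>r. bt n r) UNIV) UNIV = infsum (\<lambda>r. infsum (\<lambda>n. bt n r) UNIV) UNIV"
    by (rule infsum_swap_banach[OF bt_summable])
  define h where "h n = q ^ (n * n) * ((if n = 0 then 1 else 0) - inverse (Pp n ^ 2) / 2)" for n
  have hb: "norm (h n) \<le> norm q ^ n * (1 + inverse (c ^ 2) / 2)" for n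
  proof -
    have "norm ((if n = 0 then 1 else 0) - inverse (Pp n ^ 2) / 2) \<le> 1 + inverse (c ^ 2) / 2"
    proof -
      have e: "norm (inverse (Pp n ^ 2) / 2) = inverse (norm (Pp n) ^ 2) / 2"
        by (simp add: norm_divide norm_inverse norm_power)
      have "c ^ 2 \<le> norm (Pp n) ^ 2" using Pp_lower[of n] c_pos by (intro power_mono) auto
      then have "inverse (norm (Pp n) ^ 2) \<le> inverse (c ^ 2)" using c_pos by (intro le_imp_inverse_le) auto
      then have i1: "norm (inverse (Pp n ^ 2) / 2) \<le> inverse (c ^ 2) / 2" unfolding e by simp
      have i2: "norm ((if n = 0 then 1 else 0) - inverse (Pp n ^ 2) / 2) \<le>
         norm (if n = 0 then 1 else (0::complex)) + norm (inverse (Pp n ^ 2) / 2)"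
        by (rule norm_triangle_ineq4)
      have i3: "norm (if n = 0 then 1 else (0::complex)) \<le> 1" by simp
      from i1 i2 i3 show ?thesis by linarith
    qed
    moreover have "norm (q ^ (n * n)) \<le> norm q ^ n" unfolding norm_qpow by (rule apow_le) (cases n; simp)
    moreover have "0 \<le> norm ((if n = 0 then 1 else 0) - inverse (Pp n ^ 2) / 2)" by simp
    ultimately have "norm (q ^ (n * n)) * norm ((if n = 0 then 1 else 0) - inverse (Pp n ^ 2) / 2)
        \<le> norm q ^ n * (1 + inverse (c ^ 2) / 2)"
      by (intro mult_mono) auto
    then show ?thesis unfolding h_def norm_mult .
  qed
  have hs: "summable (\<lambda>n. norm (h n))"
    by (rule summable_comparison_test[OF _ geo_summable]) (auto intro: hb)
  have X_sum: "summable (\<lambda>n. q ^ (n * n) / (Pp n * Pp n))"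
  proof (rule sbound(1)[OF geo_summable])
    fix n
    have "norm (q ^ (n * n)) \<le> norm q ^ n" unfolding norm_qpow by (rule apow_le) (cases n; simp)
    then have "norm (q ^ (n * n) / (Pp n * Pp n)) \<le> norm q ^ n / (c * c)"
      by (rule frac_bound[OF _ Pp_lower Pp_lower c_pos])
    then show "norm (q ^ (n * n) / (Pp n * Pp n)) \<le> norm q ^ n * (1 / (c * c))" by simp
  qed
  have hform: "h n = (if n = 0 then 1 else 0) - q ^ (n * n) / (Pp n * Pp n) / 2" for n
  proof (cases "n = 0")
    case True
    then show ?thesis by (simp add: h_def)
  next
    case False
    have "q ^ (n * n) * inverse (Pp n ^ 2) = q ^ (n * n) / (Pp n * Pp n)"
      by (simp only: power2_eq_square divide_inverse)
    then show ?thesis using False unfolding h_def by simp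
  qed
  have "(\<lambda>n. (if n = 0 then 1 else 0 :: complex)) sums 1" using sums_single[of 0 "\<lambda>_. 1::complex"] by simp
  moreover have "(\<lambda>n. q ^ (n * n) / (Pp n * Pp n) / 2) sums ((\<Sum>n. q ^ (n * n) / (Pp n * Pp n)) / 2)"
    by (rule sums_divide) (rule summable_sums[OF X_sum])
  ultimately have "h sums (1 - (\<Sum>n. q ^ (n * n) / (Pp n * Pp n)) / 2)"
    unfolding hform by (rule sums_diff)
  then have L: "infsum h UNIV = 1 - (\<Sum>n. q ^ (n * n) / (Pp n * Pp n)) / 2"
    using nat_bridge(2)[OF hs] by (simp add: sums_iff)
  have hrow: "(\<lambda>n. infsum (\<lambda>r. bt n r) UNIV) = h" by (rule ext) (simp add: bt_row h_def)
  have "1 - (\<Sum>n. q ^ (n * n) / (Pp n * Pp n)) / 2 = infsum h UNIV" using L by simp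
  also have "\<dots> = infsum (\<lambda>n. infsum (\<lambda>r. bt n r) UNIV) UNIV" unfolding hrow ..
  also have "\<dots> = infsum (\<lambda>r. infsum (\<lambda>n. bt n r) UNIV) UNIV" by (rule swap)
  also have "\<dots> = infsum (\<lambda>r. (-1) powi r * q powi ((3 * r * (r + 1)) div 2) / (1 + q powi r) * inverse Qinf) UNIV"
  proof (rule infsum_cong)
    fix r
    have "aB r * q powi (r * r) = (-1) powi r * q powi ((3 * r * (r + 1)) div 2) / (1 + q powi r)"
      unfolding three_tri aB_def sg_def by (simp add: qpowi_add)
    then show "infsum (\<lambda>n. bt n r) UNIV = (-1) powi r * q powi ((3 * r * (r + 1)) div 2) / (1 + q powi r) * inverse Qinf"
      unfolding col_eq by simp
  qed
  also have "\<dots> = (\<Sum>\<^sub>\<infinity>r\<in>(UNIV::int set). (-1) powi r * q powi ((3 * r * (r + 1)) div 2) / (1 + q powi r)) * inverse Qinf"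
    by (rule infsum_cmult_left')
  finally show ?thesis .
qed

end

lemma inv_tel: fixes P t :: complex assumes "P \<noteq> 0" "t \<noteq> 0"
  shows "inverse P - inverse (P * t) = (t - 1) / (P * t)"
  using assms by (simp add: field_simps)

context qc begin

definition En :: "nat \<Rightarrow> complex" where "En n = (\<Prod>i<n. 1 + q ^ (2 * i + 2))"
definition On :: "nat \<Rightarrow> complex" where "On n = (\<Prod>j<Suc n. 1 + q ^ (2 * j + 1))"

lemma En_nz: "En n \<noteq> 0"
proof -
  have h: "\<And>i. 1 + q ^ (2 * i + 2) \<noteq> 0" by (rule onep_nz[OF qpow_nem1])
  show ?thesis unfolding En_def by (simp only: prod_zero_iff finite_lessThan) (use h in blast)
qed

lemma On_nz: "On n \<noteq> 0"
proof -
  have h: "\<And>i. 1 + q ^ (2 * i + 1) \<noteq> 0" by (rule onep_nz[OF qpow_nem1])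
  show ?thesis unfolding On_def by (simp only: prod_zero_iff finite_lessThan) (use h in blast)
qed

lemma Pp_odd: "Pp (2 * n + 1) = En n * On n"
proof (induction n)
  case 0
  then show ?case by (simp add: En_def On_def Pp_Suc)
next
  case (Suc n)
  have "Pp (2 * Suc n + 1) = Pp (2 * n + 1) * (1 + q ^ (2 * n + 2)) * (1 + q ^ (2 * Suc n + 1))"
    by (simp add: Pp_Suc)
  also have "\<dots> = En (Suc n) * On (Suc n)"
    unfolding Suc.IH by (simp add: En_def On_def)
  finally show ?case .
qed

definition Ainf where "Ainf = qpoch_inf (- (q^2)) (q^2)"

lemma qsq: "norm (q^2) < 1" using q1 by (simp add: norm_power power_less_one_iff)

lemma tail_prod: "qpoch_inf (- (q ^ (2 * n + 2))) (q^2) = Ainf / En n"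
proof -
  define f where "f j = 1 - (- (q^2)) * (q^2) ^ j" for j
  have conv: "convergent_prod f" unfolding f_def by (rule qprod_conv[OF qsq])
  have nz: "f i \<noteq> 0" for i
  proof -
    have "f i = 1 + q ^ (2 * i + 2)" by (simp add: f_def power_mult[symmetric] power_add[symmetric] algebra_simps)
    then show ?thesis using onep_nz[OF qpow_nem1[of "2 * i + 2"]] by simp
  qed
  have "prodinf f = (\<Prod>i. f (i + n)) * (\<Prod>i<n. f i)"
    by (rule prodinf_split_initial_segment[OF conv]) (use nz in auto)
  moreover have "(\<Prod>i<n. f i) = En n"
    unfolding En_def f_def by (intro prod.cong) (auto simp: power_mult[symmetric] power_add[symmetric] algebra_simps)
  moreover have "(\<lambda>i. f (i + n)) = (\<lambda>j. 1 - (- (q ^ (2 * n + 2))) * (q^2) ^ j)"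
    unfolding f_def by (rule ext) (simp add: power_mult[symmetric] power_add[symmetric] algebra_simps)
  moreover have "En n \<noteq> 0" by (rule En_nz)
  ultimately show ?thesis unfolding Ainf_def qpoch_inf_def f_def[abs_def] by (simp add: field_simps)
qed

lemma F_term: "(- q) ^ (2 * n + 1) * qpoch_inf (- ((- q) ^ (2 * n + 2))) ((- q) ^ 2) / qpoch (- q) ((- q) ^ 2) (n + 1)
   = - Ainf * (q ^ (2 * n + 1) / Pp (2 * n + 1))"
proof -
  have e1: "(- q) ^ (2 * n + 1) = - (q ^ (2 * n + 1))" by (simp add: power_minus_odd)
  have e2: "(- q) ^ (2 * n + 2) = q ^ (2 * n + 2)" by (simp add: power_minus_even)
  have e3: "(- q) ^ 2 = q ^ 2" by simp
  have e4: "qpoch (- q) (q ^ 2) (n + 1) = On n"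
    unfolding qpoch_def On_def by (intro prod.cong) (auto simp: power_mult[symmetric] algebra_simps)
  have En0: "En n \<noteq> 0" by (rule En_nz)
  have On0: "On n \<noteq> 0" by (rule On_nz)
  show ?thesis unfolding e1 e2 e3 e4 tail_prod Pp_odd using En0 On0 by (simp add: field_simps)
qed

definition aa :: "nat \<Rightarrow> complex" where "aa m = q ^ m / Pp m"
definition bb :: "nat \<Rightarrow> complex" where "bb m = (- q) ^ m / Pp m"

lemma aa_sums: "aa sums (2 - inverse Pinf)"
proof -
  have lim: "(\<lambda>m. inverse (Pp m)) \<longlonglongrightarrow> inverse Pinf"
    using Pinf_nz by (intro tendsto_inverse Pp_lim)
  have "(\<lambda>m. inverse (Pp m) - inverse (Pp (Suc m))) sums (inverse (Pp 0) - inverse Pinf)"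
    by (rule telescope_sums'[OF lim])
  moreover have "inverse (Pp m) - inverse (Pp (Suc m)) = aa (Suc m)" for m
  proof -
    have t: "1 + q ^ Suc m \<noteq> 0" by (rule onep_nz[OF qpow_nem1])
    have "inverse (Pp m) - inverse (Pp (Suc m)) = ((1 + q ^ Suc m) - 1) / (Pp m * (1 + q ^ Suc m))"
      unfolding Pp_Suc by (rule inv_tel[OF Pp_nz t])
    then show ?thesis by (simp add: aa_def Pp_Suc)
  qed
  ultimately have "(\<lambda>m. aa (Suc m)) sums (1 - inverse Pinf)" by simp
  then show ?thesis by (subst (asm) sums_Suc_iff) (simp add: aa_def)
qed

lemma bb_sums: "bb sums (\<Sum>m. (- q) ^ m / Pp m)"
proof -
  have "yt 1 = bb" by (rule ext) (simp add: yt_def bb_def)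
  then have "summable bb" using yt_summable[of 1] by simp
  moreover have "bb = (\<lambda>m. (- q) ^ m / Pp m)" by (rule ext) (simp add: bb_def)
  ultimately show ?thesis using summable_sums[of bb] by simp
qed

lemma odd_sums: "(\<lambda>n. q ^ (2 * n + 1) / Pp (2 * n + 1)) sums ((2 - inverse Pinf - (\<Sum>m. (- q) ^ m / Pp m)) / 2)"
proof -
  have s: "(\<lambda>m. (aa m - bb m) / 2) sums ((2 - inverse Pinf - (\<Sum>m. (- q) ^ m / Pp m)) / 2)"
    by (intro sums_divide sums_diff aa_sums bb_sums)
  have sm: "strict_mono (\<lambda>n::nat. 2 * n + 1)" by (rule strict_monoI) simp
  have z: "(aa m - bb m) / 2 = 0" if "m \<notin> range (\<lambda>n::nat. 2 * n + 1)" for m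
  proof -
    have "even m" using that by (metis oddE rangeI)
    then show ?thesis by (simp add: aa_def bb_def)
  qed
  have "(\<lambda>n. (aa (2 * n + 1) - bb (2 * n + 1)) / 2) sums ((2 - inverse Pinf - (\<Sum>m. (- q) ^ m / Pp m)) / 2)"
    using sums_mono_reindex[OF sm, of "\<lambda>m. (aa m - bb m) / 2"] z s by blast
  moreover have "(aa (2 * n + 1) - bb (2 * n + 1)) / 2 = q ^ (2 * n + 1) / Pp (2 * n + 1)" for n
    by (simp add: aa_def bb_def power_minus_odd field_simps)
  ultimately show ?thesis by simp
qed

lemma main: "F_ed_ou (- q) =
    - (qpoch_inf (- (q^2)) (q^2) / 2) *
      (2 - 1 / qpoch_inf (- q) q
         - (2 / qpoch_inf q q) *
           (\<Sum>\<^sub>\<infinity>n\<in>(UNIV::int set).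
              (-1) powi n * q powi ((3 * n * (n + 1)) div 2) / (1 + q powi n)))"
proof -
  define S where "S = (\<Sum>\<^sub>\<infinity>n\<in>(UNIV::int set). (-1) powi n * q powi ((3 * n * (n + 1)) div 2) / (1 + q powi n))"
  define X where "X = (\<Sum>n. q ^ (n * n) / (Pp n * Pp n))"
  define Y where "Y = (\<Sum>m. (- q) ^ m / Pp m)"
  have XY: "X + Y = 2" unfolding X_def Y_def by (rule XY_one)
  have B: "1 - X / 2 = S * inverse Qinf" unfolding X_def S_def by (rule bailey)
  have X2: "X = 2 * (1 - S * inverse Qinf)"
  proof -
    have "X = 2 * (1 - (1 - X / 2))" by simp
    then show ?thesis unfolding B .
  qed
  have Y2: "Y = 2 * S * inverse Qinf" using XY X2 by (simp add: algebra_simps)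
  have "F_ed_ou (- q) = (\<Sum>n. - Ainf * (q ^ (2 * n + 1) / Pp (2 * n + 1)))"
    unfolding F_ed_ou_def F_term ..
  also have "\<dots> = - Ainf * ((2 - inverse Pinf - Y) / 2)"
    using sums_unique[OF sums_mult[OF odd_sums, of "- Ainf"]] unfolding Y_def by simp
  also have "\<dots> = - (Ainf / 2) * (2 - 1 / Pinf - (2 / Qinf) * S)"
    unfolding Y2 by (simp add: field_simps)
  finally show ?thesis unfolding S_def Ainf_def Pinf_def Qinf_def .
qed

end

theorem theorem1p1:
  fixes q :: complex
  assumes "norm q < 1" and "q \<noteq> 0"
  shows "F_ed_ou (- q) =
    - (qpoch_inf (- (q^2)) (q^2) / 2) *
      (2 - 1 / qpoch_inf (- q) q
         - (2 / qpoch_inf q q) *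
           (\<Sum>\<^sub>\<infinity>n\<in>(UNIV::int set).
              (-1) powi n * q powi ((3 * n * (n + 1)) div 2) / (1 + q powi n)))"
proof -
  interpret qc q using assms by unfold_locales
  show ?thesis by (rule main)
qed

end
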